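(* Let $(X,d)$ be a quasi-pseudometric space. If every $\bar d$-bounded sequence in $X$ contains a $d^s$-convergent subsequence, then $X$ is right Smyth complete, i.e. every right $d$-$K$-Cauchy sequence in $X$ is $d^s$-convergent.
   Context: A quasi-pseudometric on $X$ is a map $d:X\times X\to[0,\infty)$ with $d(x,x)=0$ and $d(x,z)\le d(x,y)+d(y,z)$ for all $x,y,z$. Its conjugate is $\bar d(x,y)=d(y,x)$ and $d^s(x,y)=\max\{d(x,y),d(y,x)\}$ (a pseudometric); $x_n$ is $d^s$-convergent to $x$ iff $d(x,x_n)\to0$ and $d(x_n,x)\to0$. A set $Y\subseteq X$ is $\bar d$-bounded if there are $x\in X$, $r>0$ with $\bar d(x,y)\le r$ for all $y\in Y$; a sequence is $\bar d$-bounded if its set of terms is. A sequence $(x_n)$ is right $d$-$K$-Cauchy if for every $\varepsilon>0$ there is $n_\varepsilon$ such that $d(x_m,x_n)<\varepsilon$ whenever $n_\varepsilon\le n<m$. *)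

theory Defs
  imports Main "HOL-Analysis.Analysis"
begin

definition quasi_pseudometric :: "('a \<Rightarrow> 'a \<Rightarrow> real) \<Rightarrow> bool" where
  "quasi_pseudometric d \<longleftrightarrow>
     (\<forall>x y. 0 \<le> d x y) \<and> (\<forall>x. d x x = 0) \<and> (\<forall>x y z. d x z \<le> d x y + d y z)"

definition conj_qpm :: "('a \<Rightarrow> 'a \<Rightarrow> real) \<Rightarrow> 'a \<Rightarrow> 'a \<Rightarrow> real" where
  "conj_qpm d x y = d y x"

definition sym_qpm :: "('a \<Rightarrow> 'a \<Rightarrow> real) \<Rightarrow> 'a \<Rightarrow> 'a \<Rightarrow> real" where
  "sym_qpm d x y = max (d x y) (d y x)"

definition qconv :: "('a \<Rightarrow> 'a \<Rightarrow> real) \<Rightarrow> (nat \<Rightarrow> 'a) \<Rightarrow> 'a \<Rightarrow> bool" where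
  "qconv e s x \<longleftrightarrow> ((\<lambda>n. e x (s n)) \<longlonglongrightarrow> 0)"

definition ds_convergent :: "('a \<Rightarrow> 'a \<Rightarrow> real) \<Rightarrow> (nat \<Rightarrow> 'a) \<Rightarrow> bool" where
  "ds_convergent d s \<longleftrightarrow> (\<exists>x. qconv (sym_qpm d) s x)"

definition bounded_wrt :: "('a \<Rightarrow> 'a \<Rightarrow> real) \<Rightarrow> 'a set \<Rightarrow> bool" where
  "bounded_wrt e Y \<longleftrightarrow> (\<exists>x r. r > 0 \<and> (\<forall>y\<in>Y. e x y \<le> r))"

definition seq_bounded_wrt :: "('a \<Rightarrow> 'a \<Rightarrow> real) \<Rightarrow> (nat \<Rightarrow> 'a) \<Rightarrow> bool" where
  "seq_bounded_wrt e s \<longleftrightarrow> bounded_wrt e (range s)"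

definition right_K_Cauchy :: "('a \<Rightarrow> 'a \<Rightarrow> real) \<Rightarrow> (nat \<Rightarrow> 'a) \<Rightarrow> bool" where
  "right_K_Cauchy d s \<longleftrightarrow>
     (\<forall>\<epsilon>>0. \<exists>N. \<forall>n m. N \<le> n \<and> n < m \<longrightarrow> d (s m) (s n) < \<epsilon>)"

definition right_Smyth_complete :: "('a \<Rightarrow> 'a \<Rightarrow> real) \<Rightarrow> bool" where
  "right_Smyth_complete d \<longleftrightarrow> (\<forall>s. right_K_Cauchy d s \<longrightarrow> ds_convergent d s)"

end

theory Submission
  imports Defs
begin

lemma tend0_iff:
  fixes f :: "nat \<Rightarrow> real"
  assumes "\<forall>n. 0 \<le> f n"
  shows "(f \<longlonglongrightarrow> 0) \<longleftrightarrow> (\<forall>e>0. \<exists>N. \<forall>n\<ge>N. f n < e)"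
  using LIMSEQ_iff[of f 0] assms by simp

theorem mainTheorem2:
  fixes d :: "'a \<Rightarrow> 'a \<Rightarrow> real"
  assumes "quasi_pseudometric d"
    and "\<forall>s. seq_bounded_wrt (conj_qpm d) s \<longrightarrow>
              (\<exists>\<phi>. strict_mono \<phi> \<and> ds_convergent d (s \<circ> \<phi>))"
  shows "right_Smyth_complete d"
  unfolding right_Smyth_complete_def
proof (intro allI impI)
  fix s assume C: "right_K_Cauchy d s"
  have nn: "\<And>x y. 0 \<le> d x y" and tri: "\<And>x y z. d x z \<le> d x y + d y z"
    using assms(1) unfolding quasi_pseudometric_def by auto
  have snn: "\<And>x y. 0 \<le> sym_qpm d x y" unfolding sym_qpm_def using nn by (simp add: le_max_iff_disj)
  obtain N where N: "\<forall>n m. N \<le> n \<and> n < m \<longrightarrow> d (s m) (s n) < 1"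
    using C unfolding right_K_Cauchy_def by (meson zero_less_one)
  define r where "r = 1 + (\<Sum>k\<le>N. d (s k) (s N))"
  have sge: "(\<Sum>k\<le>N. d (s k) (s N)) \<ge> 0" by (simp add: nn sum_nonneg)
  have "\<forall>k. d (s k) (s N) \<le> r"
  proof
    fix k show "d (s k) (s N) \<le> r"
    proof (cases "k \<le> N")
      case True
      then have "d (s k) (s N) \<le> (\<Sum>k\<le>N. d (s k) (s N))"
        by (intro member_le_sum) (auto simp: nn)
      then show ?thesis unfolding r_def by simp
    next
      case False
      then have "d (s k) (s N) < 1" using N by auto
      then show ?thesis unfolding r_def using sge by simp
    qed
  qed
  moreover have "r > 0" unfolding r_def using sge by simp
  ultimately have "seq_bounded_wrt (conj_qpm d) s"
    unfolding seq_bounded_wrt_def bounded_wrt_def conj_qpm_def by auto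
  then obtain \<phi> x where phi: "strict_mono \<phi>" and cx: "qconv (sym_qpm d) (s \<circ> \<phi>) x"
    using assms(2) unfolding ds_convergent_def by blast
  have cx': "\<forall>e>0. \<exists>K. \<forall>k\<ge>K. sym_qpm d x (s (\<phi> k)) < e"
    using cx tend0_iff[of "\<lambda>n. sym_qpm d x (s (\<phi> n))"] snn unfolding qconv_def by auto
  have "\<forall>e>0. \<exists>M. \<forall>n\<ge>M. sym_qpm d x (s n) < e"
  proof (intro allI impI)
    fix e :: real assume e: "e > 0"
    obtain N1 where N1: "\<forall>n m. N1 \<le> n \<and> n < m \<longrightarrow> d (s m) (s n) < e/2"
      using C e unfolding right_K_Cauchy_def by (meson half_gt_zero)
    obtain K where K: "\<forall>k\<ge>K. sym_qpm d x (s (\<phi> k)) < e/2"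
      using cx' e by (meson half_gt_zero)
    define k0 where "k0 = max K N1"
    have k0: "\<phi> k0 \<ge> N1" "k0 \<ge> K" using seq_suble[OF phi, of k0] unfolding k0_def by auto
    show "\<exists>M. \<forall>n\<ge>M. sym_qpm d x (s n) < e"
    proof (intro exI allI impI)
      fix n assume n: "Suc (\<phi> k0) \<le> n"
      have a: "d (s n) (s (\<phi> k0)) < e/2" using N1 n k0 by auto
      have b: "d (s (\<phi> k0)) x < e/2" using K k0 unfolding sym_qpm_def by fastforce
      have 1: "d (s n) x < e" using tri[of "s n" x "s (\<phi> k0)"] a b by linarith
      define k where "k = max K (Suc n)"
      have pk: "\<phi> k > n" "k \<ge> K" using seq_suble[OF phi, of k] unfolding k_def by auto
      have c: "d x (s (\<phi> k)) < e/2" using K pk unfolding sym_qpm_def by fastforce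
      have dd: "d (s (\<phi> k)) (s n) < e/2" using N1 n k0 pk by auto
      have 2: "d x (s n) < e" using tri[of x "s n" "s (\<phi> k)"] c dd by linarith
      show "sym_qpm d x (s n) < e" unfolding sym_qpm_def using 1 2 by simp
    qed
  qed
  then have "qconv (sym_qpm d) s x"
    unfolding qconv_def using tend0_iff[of "\<lambda>n. sym_qpm d x (s n)"] snn by auto
  then show "ds_convergent d s" unfolding ds_convergent_def by blast
qed

end
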